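(* Let $U$ and $V$ be finite-dimensional vector spaces over a field $\mathbb{K}$, and $\mathcal{S}$ a linear subspace of $\mathcal{L}(U,V)$ with $\operatorname{codim}_{\mathcal{L}(U,V)}\mathcal{S}\leq 2\dim V-3$. Assume that there is a nonzero $x\in U$ with $\dim\mathcal{S}x\leq 1$, and let $F:\mathcal{S}\to V$ be a range-compatible group homomorphism. Then: (a) if $\mathcal{S}x=\{0\}$, $F$ is local; (b) if $\mathcal{S}x\neq\{0\}$, $F$ is the sum of a local map and of the map $s\mapsto\alpha(s(x))$ for some endomorphism $\alpha$ of the additive group $\mathcal{S}x$; (c) if $F$ is linear, then $F$ is local.
   Context: $\mathcal{S}x:=\{s(x):s\in\mathcal{S}\}$. A map $F:\mathcal{S}\to V$ is range-compatible when $F(s)\in\operatorname{im}s$ for all $s\in\mathcal{S}$, and local when there exists $y\in U$ with $F(s)=s(y)$ for all $s\in\mathcal{S}$. *)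

theory Defs
  imports "HOL-Analysis.Analysis" "HOL-Library.Function_Algebras"
begin

text \<open>Finite-dimensional spaces over a field 'k are modelled as 'k^'n (U) and 'k^'m (V).
  Maps U to V are functions; the vector-space structure on functions is pointwise.\<close>

definition fscale :: "'k::field \<Rightarrow> ('a \<Rightarrow> 'k^'m) \<Rightarrow> ('a \<Rightarrow> 'k^'m)" where
  "fscale c f = (\<lambda>u. c *s f u)"

interpretation funvs: vector_space "fscale :: 'k::field \<Rightarrow> ('a \<Rightarrow> 'k^'m) \<Rightarrow> ('a \<Rightarrow> 'k^'m)"
  by unfold_locales (auto simp: fscale_def fun_eq_iff vec_eq_iff algebra_simps)

definition Lin :: "('k::field^'n \<Rightarrow> 'k^'m) set" where
  "Lin = {f. Vector_Spaces.linear (*s) (*s) f}"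

definition evalset :: "('a \<Rightarrow> 'b) set \<Rightarrow> 'a \<Rightarrow> 'b set" where
  "evalset S x = (\<lambda>s. s x) ` S"

definition range_compatible :: "('a \<Rightarrow> 'b) set \<Rightarrow> (('a \<Rightarrow> 'b) \<Rightarrow> 'b) \<Rightarrow> bool" where
  "range_compatible S F \<longleftrightarrow> (\<forall>s\<in>S. F s \<in> range s)"

definition is_local :: "('a \<Rightarrow> 'b) set \<Rightarrow> (('a \<Rightarrow> 'b) \<Rightarrow> 'b) \<Rightarrow> bool" where
  "is_local S F \<longleftrightarrow> (\<exists>y. \<forall>s\<in>S. F s = s y)"

end

theory Submission
  imports Defs
begin


definition delta :: "'n \<Rightarrow> 'k::field^'m \<Rightarrow> ('n \<Rightarrow> 'k^'m)" where
  "delta i v = (\<lambda>u. if u = i then v else 0)"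

definition famb :: "('n::finite \<Rightarrow> 'k::field^'m) set" where
  "famb = (\<lambda>(i,j). delta i (axis j 1)) ` UNIV"

lemma sum_fun_apply: "(\<Sum>a\<in>A. f a) x = (\<Sum>a\<in>A. f a x)"
  by (induction A rule: infinite_finite_induct) auto

lemma fscale_apply: "fscale c f u = c *s f u" by (simp add: fscale_def)

lemma delta_in_span: "delta i v \<in> funvs.span (famb :: ('n::finite \<Rightarrow> 'k::field^'m) set)"
proof -
  define P where "P = {v::'k^'m. delta i v \<in> funvs.span (famb :: ('n::finite \<Rightarrow> 'k::field^'m) set)}"
  have sub: "vec.subspace P"
      unfolding vec.subspace_def
    proof (intro conjI ballI allI)
      show "0 \<in> P"
        using funvs.span_zero by (simp add: P_def delta_def zero_fun_def[symmetric])
    next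
      fix a b assume "a \<in> P" "b \<in> P"
      moreover have "delta i (a + b) = delta i a + delta i b" by (auto simp: delta_def fun_eq_iff)
      ultimately show "a + b \<in> P" by (simp add: P_def funvs.span_add)
    next
      fix c a assume "a \<in> P"
      moreover have "delta i (c *s a) = fscale c (delta i a)" by (auto simp: delta_def fun_eq_iff fscale_apply)
      ultimately show "c *s a \<in> P" by (simp add: P_def funvs.span_scale)
    qed
  have bas: "x \<in> P" if xin: "x \<in> cart_basis" for x :: "'k^'m"
  proof -
    obtain j where "x = axis j 1" using xin unfolding cart_basis_def by blast
    then have "delta i x \<in> (famb :: ('n::finite \<Rightarrow> 'k::field^'m) set)" by (auto simp: famb_def)
    then show "x \<in> P" by (simp add: P_def funvs.span_base)
  qed
  have "v \<in> vec.span cart_basis" by simp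
  then have "v \<in> P"
    using vec.span_induct[of v cart_basis "\<lambda>v. v \<in> P"] sub bas by simp
  then show ?thesis by (simp add: P_def)
qed

lemma famb_span: "funvs.span (famb :: ('n::finite \<Rightarrow> 'k::field^'m) set) = UNIV"
proof -
  have "f \<in> funvs.span (famb :: ('n::finite \<Rightarrow> 'k::field^'m) set)" for f
  proof -
    have "f = (\<Sum>i\<in>UNIV. delta i (f i))"
      by (auto simp: fun_eq_iff sum_fun_apply delta_def)
    also have "\<dots> \<in> funvs.span famb"
      by (rule funvs.span_sum) (rule delta_in_span)
    finally show ?thesis .
  qed
  then show ?thesis by auto
qed

lemma delta_eq_iff: "delta i (axis j (1::'k::field)) = delta i' (axis j' 1) \<longleftrightarrow> i = i' \<and> j = j'"
proof
  assume h: "delta i (axis j (1::'k)) = delta i' (axis j' 1)"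
  then have "delta i (axis j (1::'k)) i $ j = delta i' (axis j' 1) i $ j" by simp
  then show "i = i' \<and> j = j'"
    by (auto simp: delta_def axis_def split: if_splits)
qed auto

lemma famb_indep: "funvs.independent (famb :: ('n::finite \<Rightarrow> 'k::field^'m) set)"
proof -
  have fin: "finite (famb :: ('n::finite \<Rightarrow> 'k::field^'m) set)" by (simp add: famb_def)
  have "u v = 0" if sum0: "(\<Sum>v\<in>famb. fscale (u v) v) = (0::'n \<Rightarrow> 'k^'m)" and vin: "v \<in> famb" for u and v :: "'n \<Rightarrow> 'k^'m"
  proof -
    obtain i j where v: "v = delta i (axis j 1)" using vin by (auto simp: famb_def)
    have "0 = (\<Sum>w\<in>famb. fscale (u w) w) i $ j" using sum0 by simp
    also have "\<dots> = (\<Sum>w\<in>famb. u w * (w i $ j))" by (simp add: sum_fun_apply sum_component fscale_apply)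
    also have "\<dots> = (\<Sum>w\<in>famb. if w = v then u w else 0)"
    proof (rule sum.cong[OF refl])
      fix w :: "'n \<Rightarrow> 'k^'m" assume "w \<in> famb"
      then obtain i' j' where w: "w = delta i' (axis j' 1)" by (auto simp: famb_def)
      show "u w * (w i $ j) = (if w = v then u w else 0)"
        using delta_eq_iff[of i' j' i j] unfolding v w by (auto simp: delta_def axis_def)
    qed
    also have "\<dots> = u v" using fin vin by (simp add: sum.delta')
    finally show ?thesis by simp
  qed
  then show ?thesis using fin by (auto simp: funvs.dependent_finite)
qed

interpretation famvs: finite_dimensional_vector_space "fscale :: 'k::field \<Rightarrow> ('n::finite \<Rightarrow> 'k^'m) \<Rightarrow> _" famb
proof
  show "finite (famb :: ('n::finite \<Rightarrow> 'k::field^'m) set)" by (simp add: famb_def)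
qed (simp_all add: famb_indep famb_span)



lemma (in finite_dimensional_vector_space) span_disjoint_parts:
  assumes "independent C" "B0 \<subseteq> C"
  shows "span B0 \<inter> span (C - B0) \<subseteq> {0}"
proof -
  have fC: "finite C" using assms(1) finiteI_independent by blast
  have iB: "independent B0" "independent (C - B0)" using assms independent_mono by auto
  have seteq: "{x + y |x y. x \<in> span B0 \<and> y \<in> span (C - B0)} = span C"
    using assms(2) by (simp add: span_Un[symmetric] Un_absorb1 Un_Diff_cancel)
  have e1: "dim (span C) + dim (span B0 \<inter> span (C - B0))
        = dim (span B0) + dim (span (C - B0))"
    unfolding seteq[symmetric] by (rule dim_sums_Int) auto
  have e2: "dim (span C) = card C" using assms(1) by (simp add: dim_eq_card_independent)
  have e3: "dim (span B0) = card B0" "dim (span (C - B0)) = card (C - B0)"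
    using iB by (simp_all add: dim_eq_card_independent)
  have e4: "card C = card B0 + card (C - B0)"
  proof -
    have "finite B0" using fC assms(2) finite_subset by blast
    then have "card (C - B0) = card C - card B0" using assms(2) by (rule card_Diff_subset)
    moreover have "card B0 \<le> card C" using fC assms(2) by (rule card_mono)
    ultimately show ?thesis by linarith
  qed
  have "dim (span B0 \<inter> span (C - B0)) = 0" using e1 e2 e3 e4 by linarith
  then show ?thesis unfolding dim_eq_0 .
qed

lemma (in finite_dimensional_vector_space_pair_1) rank_nullity:
  assumes lf: "Vector_Spaces.linear s1 s2 f" and A: "vs1.subspace A"
  shows "vs1.dim A = vs1.dim {x\<in>A. f x = 0} + vs2.dim (f ` A)"
proof -
  interpret lf: Vector_Spaces.linear s1 s2 f by fact
  define K where "K = {x\<in>A. f x = 0}"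
  have subK: "vs1.subspace K"
    using A unfolding K_def vs1.subspace_def by (simp add: lf.add lf.scale lf.zero)
  obtain B0 where B0: "B0 \<subseteq> K" "vs1.independent B0" "K \<subseteq> vs1.span B0" "card B0 = vs1.dim K"
    using vs1.basis_exists by blast
  obtain C where C: "B0 \<subseteq> C" "C \<subseteq> A" "vs1.independent C" "A \<subseteq> vs1.span C"
    using vs1.maximal_independent_subset_extend[of B0 A] B0 K_def by auto
  have fC: "finite C" using C(3) vs1.finiteI_independent by blast
  have dimA: "vs1.dim A = card C" using vs1.basis_card_eq_dim[OF C(2) C(4) C(3)] by simp
  define C' where "C' = C - B0"
  have spanC'A: "vs1.span C' \<subseteq> A"
    using C(2) A unfolding C'_def by (meson Diff_subset order_trans vs1.span_minimal)
  have inj: "inj_on f (vs1.span C')"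
  proof (subst lf.inj_on_iff_eq_0)
    show "vs1.subspace (vs1.span C')" by simp
    show "\<forall>x\<in>vs1.span C'. f x = 0 \<longrightarrow> x = 0"
    proof (intro ballI impI)
      fix x assume x: "x \<in> vs1.span C'" "f x = 0"
      then have "x \<in> K" using spanC'A K_def by auto
      then have "x \<in> vs1.span B0" using B0 by auto
      then show "x = 0" using vs1.span_disjoint_parts[OF C(3) C(1)] x unfolding C'_def by auto
    qed
  qed
  have indep: "vs2.independent (f ` C')"
  proof (rule lf.independent_injective_image[OF _ inj])
    show "vs1.independent C'" using vs1.independent_mono[OF C(3)] unfolding C'_def by blast
  qed
  have cardimg: "card (f ` C') = card C'"
    using card_image[OF inj_on_subset[OF inj vs1.span_superset]] .
  have spaneq: "vs2.span (f ` C') = vs2.span (f ` A)"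
  proof
    show "vs2.span (f ` C') \<subseteq> vs2.span (f ` A)"
      using C(2) unfolding C'_def by (intro vs2.span_mono) auto
    have "f ` A \<subseteq> f ` vs1.span C" using C(4) by auto
    also have "\<dots> = vs2.span (f ` C)" by (simp add: lf.span_image)
    also have "\<dots> \<subseteq> vs2.span (f ` C')"
    proof (rule vs2.span_minimal)
      show "f ` C \<subseteq> vs2.span (f ` C')"
      proof
        fix y assume "y \<in> f ` C"
        then obtain c where c: "c \<in> C" "y = f c" by auto
        show "y \<in> vs2.span (f ` C')"
        proof (cases "c \<in> B0")
          case True
          then have "f c = 0" using B0(1) K_def by auto
          then show ?thesis using c vs2.span_zero by simp
        next
          case False
          then show ?thesis using c unfolding C'_def by (auto intro: vs2.span_base)
        qed
      qed
    qed simp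
    finally show "vs2.span (f ` A) \<subseteq> vs2.span (f ` C')" by (simp add: vs2.span_minimal)
  qed
  have dimimg: "vs2.dim (f ` A) = card C'"
    using vs2.dim_eq_card[OF spaneq indep] cardimg by simp
  have "card C = card B0 + card C'"
  proof -
    have "finite B0" using fC C(1) finite_subset by blast
    then have "card (C - B0) = card C - card B0" using C(1) by (rule card_Diff_subset)
    moreover have "card B0 \<le> card C" using fC C(1) by (rule card_mono)
    ultimately show ?thesis unfolding C'_def by linarith
  qed
  then show ?thesis using dimA dimimg B0(4) unfolding K_def by linarith
qed



interpretation famvec: finite_dimensional_vector_space_pair_1
  "fscale :: 'k::field \<Rightarrow> ('n::finite \<Rightarrow> 'k^'m) \<Rightarrow> _" famb "(*s) :: 'k \<Rightarrow> 'k^'m2 \<Rightarrow> 'k^'m2" ..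

interpretation famfam: finite_dimensional_vector_space_pair_1
  "fscale :: 'k::field \<Rightarrow> ('n::finite \<Rightarrow> 'k^'m) \<Rightarrow> _" famb "fscale :: 'k \<Rightarrow> ('n2 \<Rightarrow> 'k^'m2) \<Rightarrow> _" ..

definition Fam :: "('k::field^'m) set \<Rightarrow> 'n set \<Rightarrow> ('n \<Rightarrow> 'k^'m) set" where
  "Fam V J = {f. (\<forall>i. i \<notin> J \<longrightarrow> f i = 0) \<and> (\<forall>i. f i \<in> V)}"

lemma plus_fun_app: "(f + g) x = f x + g x" by simp

lemma Fam_subspace: "vec.subspace V \<Longrightarrow> funvs.subspace (Fam V J)"
  unfolding Fam_def funvs.subspace_def vec.subspace_def
  by (auto simp: fscale_def)

lemma ev_linear: "Vector_Spaces.linear fscale (*s) (\<lambda>f. f e)"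
  by (auto simp: Vector_Spaces.linear_iff fscale_def funvs.vector_space_axioms vec.vector_space_axioms)

lemma delta_Fam: "e \<in> J \<Longrightarrow> v \<in> V \<Longrightarrow> vec.subspace V \<Longrightarrow> delta e v \<in> Fam V J"
  by (auto simp: Fam_def delta_def vec.subspace_0)

lemma Fam_dim:
  fixes V :: "('k::field^'m) set" and J :: "'n::finite set"
  assumes V: "vec.subspace V"
  shows "funvs.dim (Fam V J) = card J * vec.dim V"
proof -
  have "finite J" by simp
  then show ?thesis
  proof (induction J rule: finite_induct)
    case empty
    have "Fam V ({}::'n set) = {0}" using V by (auto simp: Fam_def vec.subspace_0)
    then show ?case by simp
  next
    case (insert e J0)
    have A: "funvs.subspace (Fam V (insert e J0))" using V by (rule Fam_subspace)
    have ker: "{f \<in> Fam V (insert e J0). f e = 0} = Fam V J0"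
      using insert.hyps(2) by (auto simp: Fam_def)
    have img: "(\<lambda>f. f e) ` Fam V (insert e J0) = V"
    proof
      show "(\<lambda>f. f e) ` Fam V (insert e J0) \<subseteq> V" by (auto simp: Fam_def)
      show "V \<subseteq> (\<lambda>f. f e) ` Fam V (insert e J0)"
      proof
        fix v assume "v \<in> V"
        then have "delta e v \<in> Fam V (insert e J0)" using V by (intro delta_Fam) auto
        moreover have "delta e v e = v" by (simp add: delta_def)
        ultimately show "v \<in> (\<lambda>f. f e) ` Fam V (insert e J0)" by (metis rev_image_eqI)
      qed
    qed
    have "funvs.dim (Fam V (insert e J0)) = funvs.dim (Fam V J0) + vec.dim V"
      using famvec.rank_nullity[OF ev_linear[of e] A] unfolding ker img .
    then show ?case using insert by simp
  qed
qed

lemma dim_split: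
  fixes T :: "('n::finite \<Rightarrow> 'k::field^'m) set"
  assumes "funvs.subspace T"
  shows "funvs.dim T = funvs.dim {t\<in>T. t e = 0} + vec.dim ((\<lambda>t. t e) ` T)"
  using famvec.rank_nullity[OF ev_linear[of e] assms] .

lemma ev_image_subspace:
  fixes T :: "('n::finite \<Rightarrow> 'k::field^'m) set"
  assumes "funvs.subspace T"
  shows "vec.subspace ((\<lambda>t. t e) ` T)"
  using famvec.linear_subspace_image[OF ev_linear[of e] assms] .

lemma kernel_subspace:
  fixes T :: "('n::finite \<Rightarrow> 'k::field^'m) set"
  assumes "funvs.subspace T"
  shows "funvs.subspace {t\<in>T. t e = 0}"
  using assms unfolding funvs.subspace_def by (auto simp: fscale_apply)

lemma dim_Fam_UNIV: "vec.dim (UNIV :: ('k::field^'m) set) = CARD('m)"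
  by (rule vec_dim_card)



lemma lin_add: "Vector_Spaces.linear (*s) (*s) (\<pi>::'k::field^'m \<Rightarrow> 'k^'m2) \<Longrightarrow> \<pi> (a + b) = \<pi> a + \<pi> b"
  by (simp add: Vector_Spaces.linear_iff)
lemma lin_scale: "Vector_Spaces.linear (*s) (*s) (\<pi>::'k::field^'m \<Rightarrow> 'k^'m2) \<Longrightarrow> \<pi> (c *s a) = c *s \<pi> a"
  by (simp add: Vector_Spaces.linear_iff)
lemma lin_zero: "Vector_Spaces.linear (*s) (*s) (\<pi>::'k::field^'m \<Rightarrow> 'k^'m2) \<Longrightarrow> \<pi> 0 = 0"
  using lin_scale[of \<pi> 0 0] by simp
lemma lin_diff: "Vector_Spaces.linear (*s) (*s) (\<pi>::'k::field^'m \<Rightarrow> 'k^'m2) \<Longrightarrow> \<pi> (a - b) = \<pi> a - \<pi> b"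
proof -
  assume l: "Vector_Spaces.linear (*s) (*s) \<pi>"
  have "\<pi> a = \<pi> (a - b) + \<pi> b" using lin_add[OF l, of "a - b" b] by simp
  then show ?thesis by (metis add_diff_cancel)
qed

lemma compose_linear:
  assumes "Vector_Spaces.linear (*s) (*s) (\<pi>::'k::field^'m \<Rightarrow> 'k^'m2)"
  shows "Vector_Spaces.linear fscale fscale (\<lambda>(f::'n \<Rightarrow> 'k^'m) i. \<pi> (f i))"
  unfolding Vector_Spaces.linear_iff
proof (intro conjI allI)
  show "vector_space (fscale :: 'k \<Rightarrow> ('n \<Rightarrow> 'k^'m) \<Rightarrow> _)" by (rule funvs.vector_space_axioms)
  show "vector_space (fscale :: 'k \<Rightarrow> ('n \<Rightarrow> 'k^'m2) \<Rightarrow> _)" by (rule funvs.vector_space_axioms)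
  fix f g :: "'n \<Rightarrow> 'k^'m" and c :: 'k
  show "(\<lambda>i. \<pi> ((f + g) i)) = (\<lambda>i. \<pi> (f i)) + (\<lambda>i. \<pi> (g i))"
    using lin_add[OF assms] by (simp add: fun_eq_iff)
  show "(\<lambda>i. \<pi> (fscale c f i)) = fscale c (\<lambda>i. \<pi> (f i))"
    using lin_scale[OF assms] by (simp add: fun_eq_iff fscale_apply)
qed

lemma not_in_line:
  fixes E :: "('k::field^'m) set"
  assumes "vec.subspace E" "2 \<le> vec.dim E"
  shows "\<not> E \<subseteq> vec.span {c}"
proof
  assume "E \<subseteq> vec.span {c}"
  then have "vec.dim E \<le> vec.dim (vec.span {c})" by (rule vec.dim_subset)
  also have "\<dots> \<le> 1" by simp
  finally show False using assms(2) by simp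
qed

lemma aff_avoid:
  fixes E :: "('k::field^'m) set"
  assumes "vec.subspace E" "\<not> E \<subseteq> vec.span {c}"
  shows "\<exists>e\<in>E. v0 + e \<notin> vec.span {c}"
proof -
  obtain e1 where e1: "e1 \<in> E" "e1 \<notin> vec.span {c}" using assms(2) by auto
  show ?thesis
  proof (cases "v0 \<in> vec.span {c}")
    case True
    have "v0 + e1 \<notin> vec.span {c}"
      using True e1(2) vec.span_add_eq by blast
    then show ?thesis using e1 by blast
  next
    case False
    then show ?thesis using vec.subspace_0[OF assms(1)] by (intro bexI[of _ 0]) auto
  qed
qed

lemma pick_z:
  fixes E :: "('k::field^'m) set"
  assumes E: "vec.subspace E" "E \<noteq> {0}" and w: "w \<noteq> 0"
  shows "\<exists>e\<in>E. v0 + e = 0 \<or> w \<notin> vec.span {v0 + e}"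
proof (rule ccontr)
  assume "\<not> ?thesis"
  then have H: "\<And>e. e \<in> E \<Longrightarrow> v0 + e \<noteq> 0 \<and> w \<in> vec.span {v0 + e}" by blast
  have inw: "v0 + e \<in> vec.span {w}" if ein: "e \<in> E" for e
  proof -
    have "w \<in> vec.span {v0 + e}" using H[OF ein] by blast
    then obtain k where k: "w = k *s (v0 + e)" by (auto simp: vec.span_singleton)
    then have "k \<noteq> 0" using w by auto
    then have "v0 + e = inverse k *s w" using k by simp
    then show ?thesis by (simp add: vec.span_scale vec.span_base)
  qed
  have v0: "v0 \<in> vec.span {w}" using inw[of 0] vec.subspace_0[OF E(1)] by simp
  obtain e1 where e1: "e1 \<in> E" "e1 \<noteq> 0" using E(2) vec.subspace_0[OF E(1)] by blast
  have "e1 = (v0 + e1) - v0" by simp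
  also have "\<dots> \<in> vec.span {w}" using inw[OF e1(1)] v0 by (rule vec.span_diff)
  finally obtain b where b: "e1 = b *s w" by (auto simp: vec.span_singleton)
  obtain a where a: "v0 = a *s w" using v0 by (auto simp: vec.span_singleton)
  have "b \<noteq> 0" using b e1 by auto
  have "(- a / b) *s e1 = ((- a / b) * b) *s w" unfolding b by (rule vector_smult_assoc)
  also have "\<dots> = (- a) *s w" using \<open>b \<noteq> 0\<close> by simp
  also have "\<dots> = - v0" unfolding a by (rule vec.scale_minus_left)
  finally have "(- a / b) *s e1 = - v0" .
  then have "- v0 \<in> E" using vec.subspace_scale[OF E(1) e1(1), of "- a / b"] by simp
  then show False using H[of "- v0"] by simp
qed

lemma proj_exists:
  fixes z :: "'k::field^'m"
  assumes "z \<noteq> 0"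
  shows "\<exists>\<pi>::'k^'m \<Rightarrow> 'k^'m. Vector_Spaces.linear (*s) (*s) \<pi> \<and> (\<forall>v. \<pi> v = 0 \<longleftrightarrow> v \<in> vec.span {z})"
proof -
  have iz: "vec.independent {z}" using assms by simp
  define B where "B = vec.extend_basis {z}"
  have zB: "z \<in> B" using vec.extend_basis_superset[OF iz] B_def by auto
  have indB: "vec.independent B" using vec.independent_extend_basis[OF iz] B_def by simp
  have spB: "vec.span B = UNIV" using vec.span_extend_basis[OF iz] B_def by simp
  have fB: "finite B" using indB vec.finiteI_independent by blast
  define \<pi> where "\<pi> = vec.construct B (\<lambda>b. if b = z then 0 else b)"
  have lin: "Vector_Spaces.linear (*s) (*s) \<pi>" unfolding \<pi>_def by (rule vec.linear_construct[OF indB])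
  have \<pi>B: "b \<in> B \<Longrightarrow> \<pi> b = (if b = z then 0 else b)" for b
    unfolding \<pi>_def by (rule vec.construct_basis[OF indB])
  define K where "K = {v. \<pi> v = 0}"
  have subK: "vec.subspace K" unfolding K_def vec.subspace_def
    using lin by (simp add: lin_add lin_scale lin_zero)
  have zK: "vec.span {z} \<subseteq> K"
    using \<pi>B[OF zB] subK by (intro vec.span_minimal) (auto simp: K_def)
  have "B - {z} \<subseteq> \<pi> ` UNIV"
  proof
    fix b assume "b \<in> B - {z}"
    then have "\<pi> b = b" using \<pi>B by auto
    then show "b \<in> \<pi> ` UNIV" by (metis rangeI)
  qed
  then have "vec.dim (B - {z}) \<le> vec.dim (\<pi> ` UNIV)" by (rule vec.dim_subset)
  moreover have "vec.dim (B - {z}) = card B - 1"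
    using vec.independent_mono[OF indB, of "B - {z}"] zB fB
    by (simp add: vec.dim_eq_card_independent)
  moreover have "vec.dim (UNIV :: ('k^'m) set) = card B"
    using vec.basis_card_eq_dim[of B UNIV] indB spB by simp
  moreover have "vec.dim (UNIV :: ('k^'m) set) = vec.dim K + vec.dim (\<pi> ` UNIV)"
    using vec.rank_nullity[OF lin vec.subspace_UNIV] unfolding K_def by simp
  moreover have "card B \<noteq> 0" using zB fB by auto
  ultimately have "vec.dim K \<le> 1" by linarith
  then have "vec.dim K \<le> vec.dim (vec.span {z})" using assms by simp
  then have "vec.span {z} = K" using vec.subspace_dim_equal[OF vec.subspace_span subK zK] by simp
  then have kk: "\<forall>v. \<pi> v = 0 \<longleftrightarrow> v \<in> vec.span {z}" unfolding K_def by auto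
  show ?thesis by (rule exI[of _ \<pi>], rule conjI, rule lin, rule kk)
qed

lemma codim_image:
  fixes P :: "('n::finite \<Rightarrow> 'k::field^'m) \<Rightarrow> ('n \<Rightarrow> 'k^'m)"
  assumes lin: "Vector_Spaces.linear fscale fscale P" and A: "funvs.subspace A" and T: "funvs.subspace T" "T \<subseteq> A"
  shows "int (funvs.dim (P ` A)) - int (funvs.dim (P ` T)) \<le> int (funvs.dim A) - int (funvs.dim T)"
proof -
  have 1: "funvs.dim A = funvs.dim {x\<in>A. P x = 0} + funvs.dim (P ` A)"
    by (rule famfam.rank_nullity[OF lin A])
  have 2: "funvs.dim T = funvs.dim {x\<in>T. P x = 0} + funvs.dim (P ` T)"
    by (rule famfam.rank_nullity[OF lin T(1)])
  have "funvs.dim {x\<in>T. P x = 0} \<le> funvs.dim {x\<in>A. P x = 0}"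
    using T(2) by (intro famvs.dim_subset) auto
  then show ?thesis using 1 2 by linarith
qed



lemma proj_step:
  fixes J :: "'n::finite set" and V :: "('k::field^'m) set" and T :: "('n \<Rightarrow> 'k^'m) set"
  assumes IH: "\<forall>(V::('k^'m) set) (T::('n \<Rightarrow> 'k^'m) set) f0 w. vec.subspace V \<longrightarrow> funvs.subspace T \<longrightarrow>
      T \<subseteq> Fam V J \<longrightarrow> f0 \<in> Fam V J \<longrightarrow> w \<in> V \<longrightarrow> w \<noteq> 0 \<longrightarrow>
      int (funvs.dim (Fam V J)) - int (funvs.dim T) \<le> int (vec.dim V) - 1 \<longrightarrow>
      (\<exists>t\<in>T. w \<notin> vec.span ((\<lambda>i. f0 i + t i) ` J))"
    and V: "vec.subspace V" and T: "funvs.subspace T" "T \<subseteq> Fam V J" and f0: "f0 \<in> Fam V J"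
    and z: "z \<in> V" "z \<noteq> 0" and w: "w \<in> V" "w \<notin> vec.span {z}"
    and cd: "int (funvs.dim (Fam V J)) - int (funvs.dim T) \<le> int (vec.dim V) - 2"
  shows "\<exists>t\<in>T. w \<notin> vec.span (insert z ((\<lambda>i. f0 i + t i) ` J))"
proof -
  obtain \<pi> :: "'k^'m \<Rightarrow> 'k^'m" where lin: "Vector_Spaces.linear (*s) (*s) \<pi>"
    and ker: "\<forall>v. \<pi> v = 0 \<longleftrightarrow> v \<in> vec.span {z}"
    using proj_exists[OF z(2)] by blast
  define V2 where "V2 = \<pi> ` V"
  have V2sub: "vec.subspace V2" unfolding V2_def by (rule vec.linear_subspace_image[OF lin V])
  have spz: "vec.span {z} \<subseteq> V" using z(1) V by (intro vec.span_minimal) auto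
  have kerV: "{v\<in>V. \<pi> v = 0} = vec.span {z}" using ker spz by auto
  have dimV2: "vec.dim V = vec.dim (vec.span {z}) + vec.dim V2"
    using vec.rank_nullity[OF lin V] unfolding kerV V2_def .
  have d1: "vec.dim (vec.span {z}) = 1" using z(2) by simp
  define P where "P = (\<lambda>(f::'n \<Rightarrow> 'k^'m) i. \<pi> (f i))"
  have linP: "Vector_Spaces.linear fscale fscale P" unfolding P_def by (rule compose_linear[OF lin])
  have PFam: "P ` Fam V J = Fam V2 J"
  proof
    show "P ` Fam V J \<subseteq> Fam V2 J" by (auto simp: P_def Fam_def V2_def lin_zero[OF lin])
    show "Fam V2 J \<subseteq> P ` Fam V J"
    proof
      fix g assume g: "g \<in> Fam V2 J"
      define h where "h = (\<lambda>i. if i \<in> J then (SOME v. v \<in> V \<and> \<pi> v = g i) else 0)"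
      have ex: "\<exists>v. v \<in> V \<and> \<pi> v = g i" for i
      proof -
        have "g i \<in> \<pi> ` V" using g by (simp add: Fam_def V2_def)
        then show ?thesis by (auto simp: image_iff)
      qed
      have hi: "h i \<in> V \<and> \<pi> (h i) = g i" if "i \<in> J" for i
        using someI_ex[OF ex[of i]] that by (simp add: h_def)
      have "h \<in> Fam V J" using hi vec.subspace_0[OF V] by (auto simp: Fam_def h_def)
      moreover have "P h = g"
      proof
        fix i show "P h i = g i"
        proof (cases "i \<in> J")
          case True then show ?thesis using hi by (simp add: P_def)
        next
          case False then show ?thesis using g lin_zero[OF lin] by (simp add: P_def h_def Fam_def)
        qed
      qed
      ultimately show "g \<in> P ` Fam V J" by (metis rev_image_eqI)
    qed
  qed
  define T2 where "T2 = P ` T"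
  have T2sub: "funvs.subspace T2" unfolding T2_def by (rule famfam.linear_subspace_image[OF linP T(1)])
  have T2F: "T2 \<subseteq> Fam V2 J" using T(2) PFam unfolding T2_def by blast
  have cd2: "int (funvs.dim (Fam V2 J)) - int (funvs.dim T2) \<le> int (funvs.dim (Fam V J)) - int (funvs.dim T)"
    using codim_image[OF linP Fam_subspace[OF V] T] unfolding PFam T2_def .
  have w2: "\<pi> w \<in> V2" "\<pi> w \<noteq> 0" using w ker V2_def by auto
  have f02: "P f0 \<in> Fam V2 J" using f0 PFam by blast
  have cd3: "int (funvs.dim (Fam V2 J)) - int (funvs.dim T2) \<le> int (vec.dim V2) - 1"
    using cd cd2 dimV2 d1 by linarith
  obtain t2 where t2: "t2 \<in> T2" "\<pi> w \<notin> vec.span ((\<lambda>i. P f0 i + t2 i) ` J)"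
    using IH[rule_format, OF V2sub T2sub T2F f02 w2 cd3] by blast
  obtain t where t: "t \<in> T" "t2 = P t" using t2(1) T2_def by auto
  show ?thesis
  proof (rule bexI[OF notI t(1)])
    assume "w \<in> vec.span (insert z ((\<lambda>i. f0 i + t i) ` J))"
    then obtain k where k: "w - k *s z \<in> vec.span ((\<lambda>i. f0 i + t i) ` J)"
      by (auto simp: vec.span_insert)
    then have "\<pi> (w - k *s z) \<in> \<pi> ` vec.span ((\<lambda>i. f0 i + t i) ` J)" by blast
    also have "\<pi> ` vec.span ((\<lambda>i. f0 i + t i) ` J) = vec.span (\<pi> ` ((\<lambda>i. f0 i + t i) ` J))"
      by (simp add: vec.linear_span_image[OF lin])
    also have "\<pi> ` ((\<lambda>i. f0 i + t i) ` J) = (\<lambda>i. P f0 i + t2 i) ` J"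
      unfolding t(2) image_image P_def using lin_add[OF lin] by simp
    finally have A: "\<pi> (w - k *s z) \<in> vec.span ((\<lambda>i. P f0 i + t2 i) ` J)" .
    have "\<pi> z = 0" using ker vec.span_base[of z "{z}"] by simp
    then have "\<pi> (w - k *s z) = \<pi> w" using lin_diff[OF lin] lin_scale[OF lin] by simp
    then show False using A t2(2) by simp
  qed
qed

lemma Q_main:
  fixes J :: "'n::finite set"
  shows "\<forall>(V::('k::field^'m) set) (T::('n \<Rightarrow> 'k^'m) set) f0 w. vec.subspace V \<longrightarrow> funvs.subspace T \<longrightarrow>
      T \<subseteq> Fam V J \<longrightarrow> f0 \<in> Fam V J \<longrightarrow> w \<in> V \<longrightarrow> w \<noteq> 0 \<longrightarrow>
      int (funvs.dim (Fam V J)) - int (funvs.dim T) \<le> int (vec.dim V) - 1 \<longrightarrow>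
      (\<exists>t\<in>T. w \<notin> vec.span ((\<lambda>i. f0 i + t i) ` J))"
proof -
  have "finite J" by simp
  then show ?thesis
  proof (induction J rule: finite_induct)
    case empty
    show ?case
    proof (intro allI impI)
      fix V :: "('k^'m) set" and T :: "('n \<Rightarrow> 'k^'m) set" and f0 :: "'n \<Rightarrow> 'k^'m" and w :: "'k^'m"
      assume H: "vec.subspace V" "funvs.subspace T" "T \<subseteq> Fam V {}" "f0 \<in> Fam V {}" "w \<in> V" "w \<noteq> 0"
      show "\<exists>t\<in>T. w \<notin> vec.span ((\<lambda>i. f0 i + t i) ` ({}::'n set))"
        using funvs.subspace_0[OF H(2)] H(6) by auto
    qed
  next
    case (insert e J0)
    show ?case
    proof (intro allI impI)
      fix V :: "('k^'m) set" and T :: "('n \<Rightarrow> 'k^'m) set" and f0 :: "'n \<Rightarrow> 'k^'m" and w :: "'k^'m"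
      assume V: "vec.subspace V" and T: "funvs.subspace T" and TF: "T \<subseteq> Fam V (insert e J0)"
        and f0: "f0 \<in> Fam V (insert e J0)" and w: "w \<in> V" "w \<noteq> 0"
        and cd: "int (funvs.dim (Fam V (insert e J0))) - int (funvs.dim T) \<le> int (vec.dim V) - 1"
      define E where "E = (\<lambda>t. t e) ` T"
      define T0 where "T0 = {t\<in>T. t e = 0}"
      have Esub: "vec.subspace E" unfolding E_def by (rule ev_image_subspace[OF T])
      have EV: "E \<subseteq> V" using TF by (auto simp: E_def Fam_def)
      have T0sub: "funvs.subspace T0" unfolding T0_def by (rule kernel_subspace[OF T])
      have T0F: "T0 \<subseteq> Fam V J0" using TF by (auto simp: T0_def Fam_def)
      have dT: "funvs.dim T = funvs.dim T0 + vec.dim E" unfolding T0_def E_def by (rule dim_split[OF T])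
      have dF: "funvs.dim (Fam V (insert e J0)) = funvs.dim (Fam V J0) + vec.dim V"
        using Fam_dim[OF V, of "insert e J0"] Fam_dim[OF V, of J0] insert.hyps by simp
      have dT0: "funvs.dim T0 \<le> funvs.dim (Fam V J0)" using T0F by (rule famvs.dim_subset)
      have dE: "vec.dim E \<le> vec.dim V" using EV by (rule vec.dim_subset)
      have f0e: "f0 e \<in> V" using f0 by (auto simp: Fam_def)
      define f0' where "f0' = (\<lambda>(t1::'n \<Rightarrow> 'k^'m) i. if i = e then 0 else f0 i + t1 i)"
      have f0'F: "f0' t1 \<in> Fam V J0" if t1T: "t1 \<in> T" for t1
      proof -
        have t1F: "t1 \<in> Fam V (insert e J0)" using TF t1T by blast
        show ?thesis using t1F f0 V unfolding Fam_def f0'_def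
          by (auto simp: vec.subspace_add vec.subspace_0)
      qed
      have key: "\<exists>t1\<in>T. \<exists>t'\<in>T0. w \<notin> vec.span (insert (f0 e + t1 e) ((\<lambda>i. f0' t1 i + t' i) ` J0))"
      proof (cases "\<exists>t1\<in>T. f0 e + t1 e = 0")
        case True
        then obtain t1 where t1: "t1 \<in> T" "f0 e + t1 e = 0" by blast
        have cd0: "int (funvs.dim (Fam V J0)) - int (funvs.dim T0) \<le> int (vec.dim V) - 1"
          using cd dT dF dE by linarith
        obtain t' where t': "t' \<in> T0" "w \<notin> vec.span ((\<lambda>i. f0' t1 i + t' i) ` J0)"
          using insert.IH[rule_format, OF V T0sub T0F f0'F[OF t1(1)] w cd0] by blast
        show ?thesis using t1 t' by (intro bexI[of _ t1] bexI[of _ t']) (simp_all add: vec.span_insert_0)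
      next
        case False
        have EneV: "E \<noteq> V"
        proof
          assume "E = V"
          then have "- f0 e \<in> E" using vec.subspace_neg[OF V f0e] by simp
          then obtain t1 where "t1 \<in> T" "t1 e = - f0 e" unfolding E_def by auto
          then show False using False by auto
        qed
        have dEl: "vec.dim E < vec.dim V"
          using vec.subspace_dim_equal[OF Esub V EV] EneV by linarith
        have Ene0: "E \<noteq> {0}"
        proof
          assume "E = {0}"
          then have "vec.dim E = 0" by simp
          then show False using cd dT dF dT0 by linarith
        qed
        obtain e1 where e1: "e1 \<in> E" "f0 e + e1 = 0 \<or> w \<notin> vec.span {f0 e + e1}"
          using pick_z[OF Esub Ene0 w(2)] by blast
        then obtain t1 where t1: "t1 \<in> T" "w \<notin> vec.span {f0 e + t1 e}" and ne: "f0 e + t1 e \<noteq> 0"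
          using False unfolding E_def by blast
        have zV: "f0 e + t1 e \<in> V" using TF t1(1) f0e V by (auto simp: Fam_def vec.subspace_add)
        have cd0: "int (funvs.dim (Fam V J0)) - int (funvs.dim T0) \<le> int (vec.dim V) - 2"
          using cd dT dF dEl by linarith
        obtain t' where t': "t' \<in> T0" "w \<notin> vec.span (insert (f0 e + t1 e) ((\<lambda>i. f0' t1 i + t' i) ` J0))"
          using proj_step[OF insert.IH V T0sub T0F f0'F[OF t1(1)] zV ne w(1) t1(2) cd0] by blast
        then show ?thesis using t1 by blast
      qed
      then obtain t1 t' where t1: "t1 \<in> T" "t' \<in> T0"
        and nw: "w \<notin> vec.span (insert (f0 e + t1 e) ((\<lambda>i. f0' t1 i + t' i) ` J0))" by blast
      have tT: "t1 + t' \<in> T" using T t1 by (auto simp: T0_def funvs.subspace_add)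
      have te: "t' e = 0" using t1(2) by (simp add: T0_def)
      have eqJ0: "(\<lambda>i. f0 i + (t1 + t') i) ` J0 = (\<lambda>i. f0' t1 i + t' i) ` J0"
        using insert.hyps(2) by (intro image_cong) (auto simp: f0'_def add.assoc)
      have img: "(\<lambda>i. f0 i + (t1 + t') i) ` insert e J0 = insert (f0 e + t1 e) ((\<lambda>i. f0' t1 i + t' i) ` J0)"
        using eqJ0 te by simp
      show "\<exists>t\<in>T. w \<notin> vec.span ((\<lambda>i. f0 i + t i) ` insert e J0)"
        using tT nw img by (intro bexI[of _ "t1 + t'"]) simp_all
    qed
  qed
qed

lemma Qc:
  fixes J :: "'n::finite set" and T :: "('n \<Rightarrow> 'k::field^'m) set"
  assumes T: "funvs.subspace T" "T \<subseteq> Fam (UNIV::('k^'m) set) J" and f0: "f0 \<in> Fam (UNIV::('k^'m) set) J" and w: "w \<notin> vec.span {c}"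
    and cd: "int (funvs.dim (Fam (UNIV::('k^'m) set) J)) - int (funvs.dim T) \<le> int (vec.dim (UNIV::('k^'m) set)) - 2"
  shows "\<exists>t\<in>T. w \<notin> vec.span (insert c ((\<lambda>i. f0 i + t i) ` J))"
proof (cases "c = 0")
  case True
  have w0: "w \<noteq> 0" using w vec.span_zero by auto
  have cd1: "int (funvs.dim (Fam (UNIV::('k^'m) set) J)) - int (funvs.dim T) \<le> int (vec.dim (UNIV::('k^'m) set)) - 1"
    using cd by linarith
  obtain t where "t \<in> T" "w \<notin> vec.span ((\<lambda>i. f0 i + t i) ` J)"
    using Q_main[rule_format, OF vec.subspace_UNIV T f0 UNIV_I w0 cd1] by blast
  then show ?thesis using True by (auto simp: vec.span_insert_0)
next
  case False
  show ?thesis by (rule proj_step[OF Q_main vec.subspace_UNIV T f0 UNIV_I False UNIV_I w cd])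
qed



abbreviation FamU :: "'n set \<Rightarrow> ('n \<Rightarrow> 'k::field^'m) set" where
  "FamU J \<equiv> Fam UNIV J"

lemma dim_FamU: "funvs.dim (FamU J :: ('n::finite \<Rightarrow> 'k::field^'m) set) = card J * CARD('m)"
  using Fam_dim[OF vec.subspace_UNIV, of J] by (simp add: vec_dim_card card_cart_basis)

lemma dim_le_card_m: "vec.dim (E :: ('k::field^'m) set) \<le> CARD('m)"
  using vec.dim_subset[of E UNIV] by (simp add: vec_dim_card card_cart_basis)

lemma kernel_codim:
  fixes S :: "('n::finite \<Rightarrow> 'k::field^'m) set"
  assumes S: "funvs.subspace S" "S \<subseteq> FamU J" and i: "i \<in> J"
  shows "funvs.subspace {s\<in>S. s i = 0}" "{s\<in>S. s i = 0} \<subseteq> FamU (J - {i})"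
    "int (funvs.dim (FamU (J - {i}) :: ('n \<Rightarrow> 'k^'m) set)) - int (funvs.dim {s\<in>S. s i = 0})
      \<le> int (funvs.dim (FamU J :: ('n \<Rightarrow> 'k^'m) set)) - int (funvs.dim S)"
proof -
  show "funvs.subspace {s\<in>S. s i = 0}" by (rule kernel_subspace[OF S(1)])
  show "{s\<in>S. s i = 0} \<subseteq> FamU (J - {i})" using S(2) by (auto simp: Fam_def)
  have 1: "funvs.dim S = funvs.dim {s\<in>S. s i = 0} + vec.dim ((\<lambda>t. t i) ` S)" by (rule dim_split[OF S(1)])
  have 2: "vec.dim ((\<lambda>t. t i) ` S) \<le> CARD('m)" by (rule dim_le_card_m)
  have 3: "card J = Suc (card (J - {i}))" using card_Suc_Diff1[of J i] i by simp
  show "int (funvs.dim (FamU (J - {i}) :: ('n \<Rightarrow> 'k^'m) set)) - int (funvs.dim {s\<in>S. s i = 0})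
      \<le> int (funvs.dim (FamU J :: ('n \<Rightarrow> 'k^'m) set)) - int (funvs.dim S)"
    using 1 2 3 by (simp add: dim_FamU)
qed

lemma ev_dim_ge2:
  fixes S :: "('n::finite \<Rightarrow> 'k::field^'m) set"
  assumes S: "funvs.subspace S" "S \<subseteq> FamU J" and k: "k \<in> J"
    and cd: "int (funvs.dim (FamU J :: ('n \<Rightarrow> 'k^'m) set)) - int (funvs.dim S) \<le> int CARD('m) - 2"
  shows "2 \<le> vec.dim ((\<lambda>s. s k) ` S)"
proof -
  have 1: "funvs.dim S = funvs.dim {s\<in>S. s k = 0} + vec.dim ((\<lambda>t. t k) ` S)" by (rule dim_split[OF S(1)])
  have "funvs.dim {s\<in>S. s k = 0} \<le> funvs.dim (FamU (J - {k}) :: ('n \<Rightarrow> 'k^'m) set)"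
    using kernel_codim(2)[OF S k] by (rule famvs.dim_subset)
  moreover have "card J = Suc (card (J - {k}))" using card_Suc_Diff1[of J k] k by simp
  then have "funvs.dim (FamU J :: ('n \<Rightarrow> 'k^'m) set) = funvs.dim (FamU (J - {k}) :: ('n \<Rightarrow> 'k^'m) set) + CARD('m)"
    by (simp add: dim_FamU)
  ultimately show ?thesis using 1 cd by linarith
qed

lemma uniq_coeffs:
  fixes J :: "'n::finite set" and T :: "('n \<Rightarrow> 'k::field^'m) set"
  assumes T: "funvs.subspace T" "T \<subseteq> FamU J"
    and cd: "int (funvs.dim (FamU J :: ('n \<Rightarrow> 'k^'m) set)) - int (funvs.dim T) < int CARD('m)"
    and H: "\<forall>s\<in>T. (\<Sum>j\<in>J. \<mu> j *s s j) = 0" and k: "k \<in> J"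
  shows "\<mu> k = 0"
proof (rule ccontr)
  assume mk: "\<mu> k \<noteq> 0"
  define \<Phi> where "\<Phi> = (\<lambda>(f::'n \<Rightarrow> 'k^'m). \<Sum>j\<in>J. \<mu> j *s f j)"
  have lin: "Vector_Spaces.linear fscale (*s) \<Phi>"
    unfolding Vector_Spaces.linear_iff
  proof (intro conjI allI)
    show "vector_space (fscale :: 'k \<Rightarrow> ('n \<Rightarrow> 'k^'m) \<Rightarrow> _)" by (rule funvs.vector_space_axioms)
    show "vector_space ((*s) :: 'k \<Rightarrow> 'k^'m \<Rightarrow> _)" by (rule vec.vector_space_axioms)
    fix f g :: "'n \<Rightarrow> 'k^'m" and c :: 'k
    show "\<Phi> (f + g) = \<Phi> f + \<Phi> g"
      by (simp add: \<Phi>_def vec.scale_right_distrib sum.distrib)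
    show "\<Phi> (fscale c f) = c *s \<Phi> f"
      by (simp add: \<Phi>_def fscale_apply vec.scale_sum_right vector_smult_assoc mult.commute)
  qed
  have A: "funvs.subspace (FamU J :: ('n \<Rightarrow> 'k^'m) set)" by (rule Fam_subspace[OF vec.subspace_UNIV])
  have img: "\<Phi> ` (FamU J :: ('n \<Rightarrow> 'k^'m) set) = UNIV"
  proof -
    have "v \<in> \<Phi> ` FamU J" for v :: "'k^'m"
    proof -
      define f where "f = delta k (inverse (\<mu> k) *s v)"
      have fF: "f \<in> FamU J" unfolding f_def using k by (intro delta_Fam) auto
      have "\<Phi> f = (\<Sum>j\<in>J. if j = k then v else 0)"
        unfolding \<Phi>_def f_def delta_def
        by (rule sum.cong) (auto simp: vector_smult_assoc mk)
      also have "\<dots> = v" using k by simp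
      finally show ?thesis using fF by (metis rev_image_eqI)
    qed
    then show ?thesis by auto
  qed
  have rn: "funvs.dim (FamU J :: ('n \<Rightarrow> 'k^'m) set) = funvs.dim {x\<in>FamU J. \<Phi> x = 0} + vec.dim (UNIV :: ('k^'m) set)"
    using famvec.rank_nullity[OF lin A] unfolding img .
  have "funvs.dim T \<le> funvs.dim {x\<in>FamU J. \<Phi> x = 0}"
    using T(2) H unfolding \<Phi>_def by (intro famvs.dim_subset) auto
  then show False using rn cd by (simp add: vec_dim_card card_cart_basis)
qed

lemma span_vals_zero:
  fixes s :: "'n \<Rightarrow> 'k::field^'m"
  assumes "s i = 0"
  shows "vec.span (s ` J) = vec.span (s ` (J - {i}))"
proof -
  have "s ` J \<subseteq> insert 0 (s ` (J - {i}))" using assms by auto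
  then have "vec.span (s ` J) \<subseteq> vec.span (s ` (J - {i}))"
    by (metis vec.span_insert_0 vec.span_mono)
  moreover have "vec.span (s ` (J - {i})) \<subseteq> vec.span (s ` J)" by (intro vec.span_mono) auto
  ultimately show ?thesis by blast
qed

lemma sum_drop:
  fixes s :: "'n::finite \<Rightarrow> 'k::field^'m"
  assumes "s i = 0"
  shows "(\<Sum>j\<in>J. lam j *s s j) = (\<Sum>j\<in>J - {i}. lam j *s s j)"
proof (cases "i \<in> J")
  case True
  then show ?thesis using assms by (simp add: sum.remove)
next
  case False
  then show ?thesis by simp
qed

lemma indep_eq:
  fixes si ti :: "'k::field^'m"
  assumes si: "si \<noteq> 0" and ti: "ti \<notin> vec.span {si}"
    and eq: "a *s si + b *s ti = d *s (si + ti)"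
  shows "a = b"
proof -
  have e2: "(b - d) *s ti = (d - a) *s si"
    using eq by (simp add: vec.scale_left_diff_distrib vec.scale_right_distrib algebra_simps)
  have bd: "b = d"
  proof (rule ccontr)
    assume "b \<noteq> d"
    then have "ti = ((d - a) / (b - d)) *s si"
      using e2 by (metis (no_types, lifting) divide_inverse_commute eq_iff_diff_eq_0 vec.scale_scale
          vector_space_over_itself.scale_left_commute vec.scale_one right_inverse)
    then have "ti \<in> vec.span {si}" by (simp add: vec.span_scale vec.span_base)
    then show False using ti by simp
  qed
  then have "(d - a) *s si = 0" using e2 by simp
  then show ?thesis using si bd by simp
qed



lemma rank_one_case:
  fixes S :: "('n::finite \<Rightarrow> 'k::field^'m) set"
  assumes S: "funvs.subspace S" and dE: "2 \<le> vec.dim ((\<lambda>s. s i) ` S)"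
    and add: "\<forall>s\<in>S. \<forall>t\<in>S. F (s + t) = F s + F t" and rc: "\<forall>s\<in>S. F s \<in> vec.span {s i}"
  shows "\<exists>c. \<forall>s\<in>S. F s = c *s s i"
proof -
  define E where "E = (\<lambda>s. s i) ` S"
  have Esub: "vec.subspace E" unfolding E_def by (rule ev_image_subspace[OF S])
  have coef: "\<exists>a. F s = a *s s i" if "s \<in> S" for s
    using rc that by (auto simp: vec.span_singleton)
  have ieq: "a = b" if st: "s \<in> S" "t \<in> S" and si: "s i \<noteq> 0" and ti: "t i \<notin> vec.span {s i}"
    and a: "F s = a *s s i" and b: "F t = b *s t i" for s t a b
  proof -
    have stS: "s + t \<in> S" using st S by (simp add: funvs.subspace_add)
    obtain d where d: "F (s + t) = d *s (s + t) i" using coef[OF stS] by blast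
    have "a *s s i + b *s t i = d *s (s i + t i)" using d add st a b by simp
    then show ?thesis by (rule indep_eq[OF si ti])
  qed
  have "\<not> E \<subseteq> {0}"
  proof
    assume "E \<subseteq> {0}"
    then have "vec.dim E = 0" by (simp only: vec.dim_eq_0)
    then show False using dE unfolding E_def by linarith
  qed
  then obtain s0 where s0: "s0 \<in> S" "s0 i \<noteq> 0" unfolding E_def by auto
  obtain c where c: "F s0 = c *s s0 i" using coef[OF s0(1)] by blast
  have "\<not> E \<subseteq> vec.span {s0 i}" using not_in_line[OF Esub] dE E_def by blast
  then obtain u where u: "u \<in> S" "u i \<notin> vec.span {s0 i}" unfolding E_def by auto
  obtain b where b: "F u = b *s u i" using coef[OF u(1)] by blast
  have cb: "c = b" by (rule ieq[OF s0(1) u(1) s0(2) u(2) c b])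
  show ?thesis
  proof (intro exI ballI)
    fix s assume s: "s \<in> S"
    obtain a where a: "F s = a *s s i" using coef[OF s] by blast
    show "F s = c *s s i"
    proof (cases "s i = 0")
      case True
      then show ?thesis using a by simp
    next
      case si0: False
      show ?thesis
      proof (cases "s i \<in> vec.span {s0 i}")
        case False
        then have "c = a" by (rule ieq[OF s0(1) s s0(2) _ c a])
        then show ?thesis using a by simp
      next
        case True
        then obtain k where k: "s i = k *s s0 i" by (auto simp: vec.span_singleton)
        have "u i \<notin> vec.span {s i}"
        proof
          assume "u i \<in> vec.span {s i}"
          then obtain m where "u i = m *s s i" by (auto simp: vec.span_singleton)
          then have "u i = (m * k) *s s0 i" using k by (simp add: vector_smult_assoc)
          then have "u i \<in> vec.span {s0 i}" by (simp add: vec.span_scale vec.span_base)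
          then show False using u(2) by simp
        qed
        then have "a = b" by (rule ieq[OF s u(1) si0 _ a b])
        then show ?thesis using a cb by simp
      qed
    qed
  qed
qed



lemma T1:
  fixes J :: "'n::finite set"
  shows "\<forall>(S::('n \<Rightarrow> 'k::field^'m) set) F. funvs.subspace S \<longrightarrow> S \<subseteq> FamU J \<longrightarrow>
     int (funvs.dim (FamU J :: ('n \<Rightarrow> 'k^'m) set)) - int (funvs.dim S) \<le> int CARD('m) - 2 \<longrightarrow>
     (\<forall>s\<in>S. \<forall>t\<in>S. F (s + t) = F s + F t) \<longrightarrow> (\<forall>s\<in>S. F s \<in> vec.span (s ` J)) \<longrightarrow>
     (\<exists>lam. \<forall>s\<in>S. F s = (\<Sum>j\<in>J. lam j *s s j))"
proof (induction "card J" arbitrary: J rule: less_induct)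
  case less
  show ?case
  proof (intro allI impI)
    fix S :: "('n \<Rightarrow> 'k^'m) set" and F :: "('n \<Rightarrow> 'k^'m) \<Rightarrow> 'k^'m"
    assume S: "funvs.subspace S" and SF: "S \<subseteq> FamU J"
      and cd: "int (funvs.dim (FamU J :: ('n \<Rightarrow> 'k^'m) set)) - int (funvs.dim S) \<le> int CARD('m) - 2"
      and add: "\<forall>s\<in>S. \<forall>t\<in>S. F (s + t) = F s + F t" and rc: "\<forall>s\<in>S. F s \<in> vec.span (s ` J)"
    have "J = {} \<or> (\<exists>i. J = {i}) \<or> 2 \<le> card J"
    proof -
      have fJ: "finite J" by simp
      consider "card J = 0" | "card J = 1" | "2 \<le> card J" by linarith
      then show ?thesis
      proof cases
        case 1 then show ?thesis using fJ by simp
      next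
        case 2 then show ?thesis by (simp add: card_1_singleton_iff)
      next
        case 3 then show ?thesis by simp
      qed
    qed
    then consider (e) "J = {}" | (one) i where "J = {i}" | (two) "2 \<le> card J" by blast
    then show "\<exists>lam. \<forall>s\<in>S. F s = (\<Sum>j\<in>J. lam j *s s j)"
    proof cases
      case e
      then show ?thesis using rc by auto
    next
      case (one i)
      have dE: "2 \<le> vec.dim ((\<lambda>s. s i) ` S)" using ev_dim_ge2[OF S SF _ cd] one by simp
      have rc1: "\<forall>s\<in>S. F s \<in> vec.span {s i}" using rc one by simp
      obtain c where c: "\<forall>s\<in>S. F s = c *s s i" using rank_one_case[OF S dE add rc1] by blast
      show ?thesis using one c by (intro exI[of _ "\<lambda>_. c"]) simp
    next
      case two
      define Si where "Si = (\<lambda>i. {s\<in>S. s i = 0})"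
      have Si_sub: "funvs.subspace (Si i)" if "i \<in> J" for i
        unfolding Si_def by (rule kernel_codim(1)[OF S SF that])
      have Si_F: "Si i \<subseteq> FamU (J - {i})" if "i \<in> J" for i
        unfolding Si_def by (rule kernel_codim(2)[OF S SF that])
      have Si_cd: "int (funvs.dim (FamU (J - {i}) :: ('n \<Rightarrow> 'k^'m) set)) - int (funvs.dim (Si i)) \<le> int CARD('m) - 2"
        if "i \<in> J" for i
        using kernel_codim(3)[OF S SF that] cd unfolding Si_def by linarith
      have IHi: "\<exists>lam. \<forall>s\<in>Si i. F s = (\<Sum>j\<in>J - {i}. lam j *s s j)" if i: "i \<in> J" for i
      proof -
        have "card (J - {i}) < card J" using card_Diff1_less[of J i] i by simp
        note IH = less.hyps[OF this]
        have addi: "\<forall>s\<in>Si i. \<forall>t\<in>Si i. F (s + t) = F s + F t" using add by (auto simp: Si_def)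
        have rci: "\<forall>s\<in>Si i. F s \<in> vec.span (s ` (J - {i}))"
        proof
          fix s assume "s \<in> Si i"
          then have sS: "s \<in> S" and si: "s i = 0" by (auto simp: Si_def)
          have a: "F s \<in> vec.span (s ` J)" using rc sS by blast
          have eq: "vec.span (s ` J) = vec.span (s ` (J - {i}))" using si by (rule span_vals_zero)
          show "F s \<in> vec.span (s ` (J - {i}))" using a unfolding eq .
        qed
        show ?thesis by (rule IH[rule_format, OF Si_sub[OF i] Si_F[OF i] Si_cd[OF i]]) (use addi rci in auto)
      qed
      then have "\<forall>i\<in>J. \<exists>lam. \<forall>s\<in>Si i. F s = (\<Sum>j\<in>J - {i}. lam j *s s j)" by blast
      then obtain \<Lambda> where \<Lambda>: "\<forall>i\<in>J. \<forall>s\<in>Si i. F s = (\<Sum>j\<in>J - {i}. \<Lambda> i j *s s j)"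
        using bchoice[of J "\<lambda>i lam. \<forall>s\<in>Si i. F s = (\<Sum>j\<in>J - {i}. lam j *s s j)"] by blast
      have cons: "\<Lambda> i j = \<Lambda> k j" if ij: "i \<in> J" "k \<in> J" "i \<noteq> k" "j \<in> J" "j \<noteq> i" "j \<noteq> k" for i k j
      proof -
        define Sik where "Sik = {s \<in> Si i. s k = 0}"
        have kJi: "k \<in> J - {i}" using ij by simp
        have 1: "funvs.subspace Sik" "Sik \<subseteq> FamU (J - {i} - {k})"
          unfolding Sik_def using kernel_codim(1,2)[OF Si_sub[OF ij(1)] Si_F[OF ij(1)] kJi] by auto
        have cdik: "int (funvs.dim (FamU (J - {i} - {k}) :: ('n \<Rightarrow> 'k^'m) set)) - int (funvs.dim Sik) < int CARD('m)"
          using kernel_codim(3)[OF Si_sub[OF ij(1)] Si_F[OF ij(1)] kJi] Si_cd[OF ij(1)] unfolding Sik_def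
          by linarith
        have H: "\<forall>s\<in>Sik. (\<Sum>j\<in>J - {i} - {k}. (\<Lambda> i j - \<Lambda> k j) *s s j) = 0"
        proof
          fix s assume s: "s \<in> Sik"
          have sS: "s \<in> S" "s i = 0" "s k = 0" using s by (auto simp: Sik_def Si_def)
          have sik: "s \<in> Si i" "s \<in> Si k" using sS by (auto simp: Si_def)
          have e1: "F s = (\<Sum>j\<in>J - {i} - {k}. \<Lambda> i j *s s j)"
            using \<Lambda> ij(1) sik(1) sum_drop[of s k "\<Lambda> i" "J - {i}"] sS(3) by simp
          have JJ: "J - {k} - {i} = J - {i} - {k}" by auto
          have e2: "F s = (\<Sum>j\<in>J - {i} - {k}. \<Lambda> k j *s s j)"
            using \<Lambda> ij(2) sik(2) sum_drop[of s i "\<Lambda> k" "J - {k}"] sS(2) JJ by simp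
          show "(\<Sum>j\<in>J - {i} - {k}. (\<Lambda> i j - \<Lambda> k j) *s s j) = 0"
            using e1 e2 by (simp add: vec.scale_left_diff_distrib sum_subtractf)
        qed
        have jJ: "j \<in> J - {i} - {k}" using ij by simp
        have "(\<lambda>j. \<Lambda> i j - \<Lambda> k j) j = 0" by (rule uniq_coeffs[OF 1 cdik H jJ])
        then show ?thesis by simp
      qed
      define \<mu> where "\<mu> = (\<lambda>j. \<Lambda> (SOME i. i \<in> J \<and> i \<noteq> j) j)"
      have \<mu>_ok: "\<mu> j = \<Lambda> i j" if ij: "i \<in> J" "j \<in> J" "j \<noteq> i" for i j
      proof -
        define i' where "i' = (SOME i. i \<in> J \<and> i \<noteq> j)"
        have i': "i' \<in> J" "i' \<noteq> j" unfolding i'_def using someI[of "\<lambda>i. i \<in> J \<and> i \<noteq> j" i] ij by auto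
        have mu: "\<mu> j = \<Lambda> i' j" unfolding \<mu>_def i'_def ..
        show ?thesis
        proof (cases "i' = i")
          case True then show ?thesis using mu by simp
        next
          case False
          have "\<Lambda> i' j = \<Lambda> i j" by (rule cons[OF i'(1) ij(1) False ij(2)]) (use i' ij in auto)
          then show ?thesis using mu by simp
        qed
      qed
      have Fi: "F s = (\<Sum>j\<in>J. \<mu> j *s s j)" if iis: "i \<in> J" "s \<in> Si i" for i s
      proof -
        have si: "s i = 0" using iis by (simp add: Si_def)
        have "(\<Sum>j\<in>J. \<mu> j *s s j) = (\<Sum>j\<in>J - {i}. \<mu> j *s s j)" by (rule sum_drop[of s i, OF si])
        also have "\<dots> = (\<Sum>j\<in>J - {i}. \<Lambda> i j *s s j)" by (rule sum.cong) (auto simp: \<mu>_ok[OF iis(1)])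
        also have "\<dots> = F s" using \<Lambda> iis by simp
        finally show ?thesis by simp
      qed
      define G where "G = (\<lambda>s. F s - (\<Sum>j\<in>J. \<mu> j *s s j))"
      have Gadd: "G (s + t) = G s + G t" if "s \<in> S" "t \<in> S" for s t
      proof -
        have "(\<Sum>j\<in>J. \<mu> j *s (s + t) j) = (\<Sum>j\<in>J. \<mu> j *s s j) + (\<Sum>j\<in>J. \<mu> j *s t j)"
          by (simp add: vec.scale_right_distrib sum.distrib)
        then show ?thesis using add that unfolding G_def by (simp add: algebra_simps)
      qed
      have G0: "G s = 0" if "i \<in> J" "s \<in> Si i" for i s using Fi[OF that] by (simp add: G_def)
      have Grc: "G s \<in> vec.span (s ` J)" if s: "s \<in> S" for s
      proof -
        have "(\<Sum>j\<in>J. \<mu> j *s s j) \<in> vec.span (s ` J)"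
          by (intro vec.span_sum vec.span_scale vec.span_base) auto
        then show ?thesis using rc s unfolding G_def by (simp add: vec.span_diff)
      qed
      have GsS: "G s = G (s + t)" if "s \<in> S" "i \<in> J" "t \<in> Si i" for s t i
        using Gadd[OF that(1), of t] G0[OF that(2,3)] that by (simp add: Si_def)
      have claimA: "G s \<in> vec.span {s i}" if s: "s \<in> S" and i: "i \<in> J" for s i
      proof (rule ccontr)
        assume w: "G s \<notin> vec.span {s i}"
        define f0 where "f0 = (\<lambda>j. if j = i then 0 else s j)"
        have f0F: "f0 \<in> FamU (J - {i})" using SF s by (auto simp: f0_def Fam_def)
        have cdq: "int (funvs.dim (Fam (UNIV::('k^'m) set) (J - {i}))) - int (funvs.dim (Si i))
            \<le> int (vec.dim (UNIV::('k^'m) set)) - 2"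
          using Si_cd[OF i] by (simp add: vec_dim_card card_cart_basis)
        obtain t where t: "t \<in> Si i" "G s \<notin> vec.span (insert (s i) ((\<lambda>j. f0 j + t j) ` (J - {i})))"
          using Qc[OF Si_sub[OF i] Si_F[OF i] f0F w cdq] by blast
        have img: "(s + t) ` J = insert (s i) ((\<lambda>j. f0 j + t j) ` (J - {i}))"
        proof -
          have "J = insert i (J - {i})" using i by blast
          then have "(s + t) ` J = insert ((s + t) i) ((s + t) ` (J - {i}))" by (metis image_insert)
          moreover have "(s + t) i = s i" using t(1) by (simp add: Si_def)
          moreover have "(s + t) ` (J - {i}) = (\<lambda>j. f0 j + t j) ` (J - {i})"
            by (rule image_cong) (auto simp: f0_def)
          ultimately show ?thesis by simp
        qed
        have stS: "s + t \<in> S" using s t(1) S by (simp add: Si_def funvs.subspace_add)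
        have "G s \<in> vec.span ((s + t) ` J)" using GsS[OF s i t(1)] Grc[OF stS] by simp
        then show False using t(2) img by simp
      qed
      have claimB: "G s = 0" if s: "s \<in> S" and ik: "i \<in> J" "k \<in> J" and si: "s i \<noteq> 0"
        and sk: "s k \<notin> vec.span {s i}" for s i k
      proof -
        obtain a where a: "G s = a *s s i" using claimA[OF s ik(1)] by (auto simp: vec.span_singleton)
        obtain b where b: "G s = b *s s k" using claimA[OF s ik(2)] by (auto simp: vec.span_singleton)
        have "b = 0"
        proof (rule ccontr)
          assume b0: "b \<noteq> 0"
          have "s k = inverse b *s (b *s s k)" using b0 by (simp add: vector_smult_assoc)
          also have "\<dots> = inverse b *s (a *s s i)" using a b by simp
          also have "\<dots> = (inverse b * a) *s s i" by (simp add: vector_smult_assoc)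
          finally have "s k \<in> vec.span {s i}" by (simp add: vec.span_scale vec.span_base)
          then show False using sk by simp
        qed
        then show ?thesis using b by simp
      qed
      have Gz: "G s = 0" if s: "s \<in> S" for s
      proof -
        have "J \<noteq> {}" using two by auto
        then obtain i where i: "i \<in> J" by blast
        show ?thesis
        proof (cases "s i = 0")
          case True then show ?thesis using G0[OF i] s by (simp add: Si_def)
        next
          case False
          have "card (J - {i}) \<noteq> 0" using two i by (simp add: card_Diff_singleton)
          then have "J - {i} \<noteq> {}" by auto
          then obtain k where kJ: "k \<in> J - {i}" by blast
          have dE: "2 \<le> vec.dim ((\<lambda>t. t k) ` Si i)"
            by (rule ev_dim_ge2[OF Si_sub[OF i] Si_F[OF i] kJ Si_cd[OF i]])
          have nl: "\<not> (\<lambda>t. t k) ` Si i \<subseteq> vec.span {s i}"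
            by (rule not_in_line[OF ev_image_subspace[OF Si_sub[OF i]] dE])
          obtain e where e: "e \<in> (\<lambda>t. t k) ` Si i" "s k + e \<notin> vec.span {s i}"
            using aff_avoid[OF ev_image_subspace[OF Si_sub[OF i]] nl] by blast
          then obtain t where t: "t \<in> Si i" "s k + t k \<notin> vec.span {s i}" by auto
          have stS: "s + t \<in> S" using s t(1) S by (simp add: Si_def funvs.subspace_add)
          have ti: "t i = 0" using t(1) by (simp add: Si_def)
          have "G (s + t) = 0"
            by (rule claimB[OF stS i, of k]) (use kJ False ti t(2) in simp_all)
          moreover have "G (s + t) = G s" using GsS[OF s i t(1)] by simp
          ultimately show ?thesis by simp
        qed
      qed
      show ?thesis
      proof (intro exI[of _ \<mu>] ballI)
        fix s assume "s \<in> S"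
        then show "F s = (\<Sum>j\<in>J. \<mu> j *s s j)" using Gz[of s] by (simp add: G_def)
      qed
    qed
  qed
qed



interpretation famfun: finite_dimensional_vector_space_pair_1
  "fscale :: 'k::field \<Rightarrow> ('n::finite \<Rightarrow> 'k^'m) \<Rightarrow> _" famb "fscale :: 'k \<Rightarrow> ('a \<Rightarrow> 'k^'m2) \<Rightarrow> _" ..

lemma basis_with_x:
  fixes x :: "'k::field^'n"
  assumes "x \<noteq> 0"
  shows "\<exists>(\<beta>::'n \<Rightarrow> 'k^'n) i0. \<beta> i0 = x \<and> inj \<beta> \<and> vec.independent (range \<beta>) \<and> vec.span (range \<beta>) = UNIV"
proof -
  have ix: "vec.independent {x}" using assms by simp
  define B where "B = vec.extend_basis {x}"
  have xB: "x \<in> B" using vec.extend_basis_superset[OF ix] B_def by auto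
  have indB: "vec.independent B" using vec.independent_extend_basis[OF ix] B_def by simp
  have spB: "vec.span B = UNIV" using vec.span_extend_basis[OF ix] B_def by simp
  have fB: "finite B" using indB vec.finiteI_independent by blast
  have "card B = vec.dim (UNIV :: ('k^'n) set)"
    using vec.basis_card_eq_dim[of B UNIV] indB spB by simp
  then have cB: "card (UNIV :: 'n set) = card B" by (simp add: vec_dim_card card_cart_basis)
  obtain h where h: "bij_betw h (UNIV :: 'n set) B"
    using finite_same_card_bij[OF _ fB cB] by auto
  have rh: "range h = B" using bij_betw_imp_surj_on[OF h] .
  have ih: "inj h" using bij_betw_imp_inj_on[OF h] .
  define i0 where "i0 = inv_into UNIV h x"
  have "h i0 = x" unfolding i0_def using xB rh by (simp add: f_inv_into_f)
  then show ?thesis using ih rh indB spB by blast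
qed

lemma lin_range_span:
  fixes s :: "'k::field^'n \<Rightarrow> 'k^'m" and \<beta> :: "'i \<Rightarrow> 'k^'n"
  assumes lin: "Vector_Spaces.linear (*s) (*s) s" and sp: "vec.span (range \<beta>) = UNIV"
  shows "range s = vec.span (range (\<lambda>i. s (\<beta> i)))"
proof -
  have "range s = s ` vec.span (range \<beta>)" using sp by simp
  also have "\<dots> = vec.span (s ` range \<beta>)" by (simp add: vec.linear_span_image[OF lin])
  also have "s ` range \<beta> = range (\<lambda>i. s (\<beta> i))" by auto
  finally show ?thesis .
qed

lemma lin_sum_apply:
  fixes s :: "'k::field^'n \<Rightarrow> 'k^'m"
  assumes lin: "Vector_Spaces.linear (*s) (*s) s"
  shows "s (\<Sum>j\<in>J. c j *s \<beta> j) = (\<Sum>j\<in>J. c j *s s (\<beta> j))"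
proof -
  have "s (\<Sum>j\<in>J. c j *s \<beta> j) = (\<Sum>j\<in>J. s (c j *s \<beta> j))" by (rule vec.linear_sum[OF lin])
  also have "\<dots> = (\<Sum>j\<in>J. c j *s s (\<beta> j))" by (simp add: lin_scale[OF lin])
  finally show ?thesis .
qed

lemma range_subspace:
  fixes s :: "'k::field^'n \<Rightarrow> 'k^'m"
  assumes lin: "Vector_Spaces.linear (*s) (*s) s"
  shows "vec.subspace (range s)"
  using vec.linear_subspace_image[OF lin vec.subspace_UNIV] .



theorem proposition2p9:
  fixes S :: "('k::field^'n \<Rightarrow> 'k^'m) set"
    and F :: "('k^'n \<Rightarrow> 'k^'m) \<Rightarrow> 'k^'m"
    and x :: "'k^'n"
  assumes S_sub: "S \<subseteq> Lin"
    and S_subspace: "funvs.subspace S"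
    and codim: "int (funvs.dim (Lin :: ('k^'n \<Rightarrow> 'k^'m) set)) - int (funvs.dim S)
                  \<le> 2 * int (vec.dim (UNIV :: ('k^'m) set)) - 3"
    and x_nz: "x \<noteq> 0"
    and dim_Sx: "vec.dim (evalset S x) \<le> 1"
    and F_hom: "\<forall>s\<in>S. \<forall>t\<in>S. F (s + t) = F s + F t"
    and F_rc: "range_compatible S F"
  shows "(evalset S x = {0} \<longrightarrow> is_local S F)
       \<and> (evalset S x \<noteq> {0} \<longrightarrow>
            (\<exists>y \<alpha>. \<alpha> ` evalset S x \<subseteq> evalset S x
                 \<and> (\<forall>a\<in>evalset S x. \<forall>b\<in>evalset S x. \<alpha> (a + b) = \<alpha> a + \<alpha> b)
                 \<and> (\<forall>s\<in>S. F s = s y + \<alpha> (s x))))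
       \<and> ((\<forall>s\<in>S. \<forall>c. F (fscale c s) = c *s F s) \<longrightarrow> is_local S F)"
proof -
  have nd: "vec.dim (UNIV :: ('k^'m) set) = CARD('m)" by (rule vec_dim_card)
  obtain \<beta> :: "'n \<Rightarrow> 'k^'n" and i0 where \<beta>: "\<beta> i0 = x" "inj \<beta>" "vec.independent (range \<beta>)"
    "vec.span (range \<beta>) = UNIV"
    using basis_with_x[OF x_nz] by blast
  define B where "B = range \<beta>"
  have indB: "vec.independent B" using \<beta>(3) B_def by simp
  define R where "R = (\<lambda>(s::'k^'n \<Rightarrow> 'k^'m) i. s (\<beta> i))"
  define Rinv where "Rinv = (\<lambda>(g::'n \<Rightarrow> 'k^'m). vec.construct B (\<lambda>b. g (inv \<beta> b)))"
  have linRinv_pt: "Vector_Spaces.linear (*s) (*s) (Rinv g)" for g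
    unfolding Rinv_def by (rule vec.linear_construct[OF indB])
  have Rinv_beta: "Rinv g (\<beta> i) = g i" for g i
  proof -
    have "\<beta> i \<in> B" by (simp add: B_def)
    then have "Rinv g (\<beta> i) = g (inv \<beta> (\<beta> i))" unfolding Rinv_def by (rule vec.construct_basis[OF indB])
    then show ?thesis using inv_f_f[OF \<beta>(2)] by simp
  qed
  have RRinv: "R (Rinv g) = g" for g by (simp add: R_def Rinv_beta fun_eq_iff)
  have linS: "Vector_Spaces.linear (*s) (*s) s" if "s \<in> Lin" for s using that by (simp add: Lin_def)
  have Req: "s = t" if "s \<in> Lin" "t \<in> Lin" "R s = R t" for s t
  proof
    fix v
    have "\<forall>b\<in>B. s b = t b" using that(3) by (auto simp: B_def R_def fun_eq_iff)
    moreover have "v \<in> vec.span B" using \<beta>(4) B_def by simp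
    ultimately show "s v = t v" using vec.linear_eq_on_span[OF linS[OF that(1)] linS[OF that(2)]] by blast
  qed
  have RinvLin: "Rinv g \<in> Lin" for g using linRinv_pt by (simp add: Lin_def)
  have RinvR: "Rinv (R s) = s" if "s \<in> Lin" for s
    using Req[OF RinvLin that] RRinv by simp
  have Rinv_add: "Rinv (g + h) = Rinv g + Rinv h" for g h
  proof
    fix v
    have "Rinv (g + h) v = vec.construct B (\<lambda>b. g (inv \<beta> b) + h (inv \<beta> b)) v"
      by (simp add: Rinv_def)
    also have "\<dots> = Rinv g v + Rinv h v" unfolding Rinv_def by (rule vec.construct_add[OF indB])
    finally show "Rinv (g + h) v = (Rinv g + Rinv h) v" by simp
  qed
  have Rinv_scale: "Rinv (fscale c g) = fscale c (Rinv g)" for c g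
  proof
    fix v
    have "Rinv (fscale c g) v = vec.construct B (\<lambda>b. c *s g (inv \<beta> b)) v"
      by (simp add: Rinv_def fscale_def)
    also have "\<dots> = c *s Rinv g v" unfolding Rinv_def by (rule vec.construct_scale[OF indB])
    finally show "Rinv (fscale c g) v = fscale c (Rinv g) v" by (simp add: fscale_apply)
  qed
  have linRinv: "Vector_Spaces.linear fscale fscale Rinv"
    unfolding Vector_Spaces.linear_iff
  proof (intro conjI allI)
    show "vector_space (fscale :: 'k \<Rightarrow> ('n \<Rightarrow> 'k^'m) \<Rightarrow> _)" by (rule funvs.vector_space_axioms)
    show "vector_space (fscale :: 'k \<Rightarrow> ('k^'n \<Rightarrow> 'k^'m) \<Rightarrow> _)" by (rule funvs.vector_space_axioms)
  qed (simp_all add: Rinv_add Rinv_scale)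
  have injRinv: "inj_on Rinv X" for X
  proof (rule inj_onI)
    fix g h assume "Rinv g = Rinv h"
    then have "R (Rinv g) = R (Rinv h)" by simp
    then show "g = h" by (simp add: RRinv)
  qed
  have dimRinv: "funvs.dim (Rinv ` X) = funvs.dim X" for X :: "('n \<Rightarrow> 'k^'m) set"
    by (rule famfam.dim_image_eq[OF linRinv injRinv])
  define S' where "S' = R ` S"
  have SR: "S = Rinv ` S'"
  proof
    show "S \<subseteq> Rinv ` S'"
    proof
      fix s assume "s \<in> S"
      then have "s = Rinv (R s)" "R s \<in> S'" using RinvR S_sub S'_def by auto
      then show "s \<in> Rinv ` S'" by blast
    qed
    show "Rinv ` S' \<subseteq> S" using RinvR S_sub S'_def by auto
  qed
  have LinR: "Lin = Rinv ` UNIV"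
  proof
    show "Lin \<subseteq> Rinv ` UNIV"
    proof
      fix s :: "'k^'n \<Rightarrow> 'k^'m" assume "s \<in> Lin"
      then have "s = Rinv (R s)" using RinvR by simp
      then show "s \<in> Rinv ` UNIV" by blast
    qed
    show "Rinv ` UNIV \<subseteq> Lin" using RinvLin by auto
  qed
  have FamUNIV: "FamU (UNIV::'n set) = (UNIV :: ('n \<Rightarrow> 'k^'m) set)" by (auto simp: Fam_def)
  have dimS: "funvs.dim S = funvs.dim S'" using dimRinv[of S'] SR by simp
  have dimLin: "funvs.dim (Lin :: ('k^'n \<Rightarrow> 'k^'m) set) = funvs.dim (FamU (UNIV::'n set) :: ('n \<Rightarrow> 'k^'m) set)"
    using dimRinv[of UNIV] LinR FamUNIV by simp
  have RS: "Rinv (R s) = s" if "s \<in> S" for s using RinvR S_sub that by auto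
  have Rinv_S': "Rinv g \<in> S" if "g \<in> S'" for g using that RS S'_def by auto
  have R0: "R 0 = 0" by (simp add: R_def fun_eq_iff)
  have S'sub: "funvs.subspace S'"
    unfolding funvs.subspace_def
  proof (intro conjI ballI allI)
    show "0 \<in> S'" using funvs.subspace_0[OF S_subspace] R0 S'_def by (metis rev_image_eqI)
  next
    fix g h assume "g \<in> S'" "h \<in> S'"
    then obtain s t where "s \<in> S" "t \<in> S" "g = R s" "h = R t" using S'_def by auto
    moreover have "R s + R t = R (s + t)" by (simp add: R_def fun_eq_iff)
    ultimately show "g + h \<in> S'" using funvs.subspace_add[OF S_subspace] S'_def by auto
  next
    fix c g assume "g \<in> S'"
    then obtain s where "s \<in> S" "g = R s" using S'_def by auto
    moreover have "fscale c (R s) = R (fscale c s)" by (simp add: R_def fun_eq_iff fscale_apply)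
    ultimately show "fscale c g \<in> S'" using funvs.subspace_scale[OF S_subspace] S'_def by auto
  qed
  define J1 where "J1 = (UNIV::'n set) - {i0}"
  define T' where "T' = {g \<in> S'. g i0 = 0}"
  have T'sub: "funvs.subspace T'" unfolding T'_def by (rule kernel_subspace[OF S'sub])
  have T'F: "T' \<subseteq> FamU J1" by (auto simp: T'_def J1_def Fam_def)
  have evS': "(\<lambda>g. g i0) ` S' = evalset S x"
    by (auto simp: S'_def R_def evalset_def \<beta>(1) image_image)
  have dsplit: "funvs.dim S' = funvs.dim T' + vec.dim (evalset S x)"
    using dim_split[OF S'sub, of i0] evS' unfolding T'_def by simp
  have cJ: "card (UNIV::'n set) = Suc (card J1)" using card_Suc_Diff1[of UNIV i0] by (simp add: J1_def)
  have dF: "funvs.dim (FamU (UNIV::'n set) :: ('n \<Rightarrow> 'k^'m) set) = funvs.dim (FamU J1 :: ('n \<Rightarrow> 'k^'m) set) + CARD('m)"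
    using cJ by (simp add: dim_FamU)
  have cdT: "int (funvs.dim (FamU J1 :: ('n \<Rightarrow> 'k^'m) set)) - int (funvs.dim T') \<le> int CARD('m) - 2"
    using codim dimS dimLin dsplit dF dim_Sx nd by linarith
  define F' where "F' = (\<lambda>g. F (Rinv g))"
  have F'add: "\<forall>g\<in>T'. \<forall>h\<in>T'. F' (g + h) = F' g + F' h"
    using F_hom Rinv_add Rinv_S' by (auto simp: F'_def T'_def)
  have rng: "range s = vec.span (range (R s))" if "s \<in> Lin" for s
    using lin_range_span[OF linS[OF that] \<beta>(4)] by (simp add: R_def)
  have F'rc: "\<forall>g\<in>T'. F' g \<in> vec.span (g ` J1)"
  proof
    fix g assume g: "g \<in> T'"
    have "F (Rinv g) \<in> range (Rinv g)" using F_rc Rinv_S' g by (auto simp: range_compatible_def T'_def)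
    also have "range (Rinv g) = vec.span (range g)" using rng[OF RinvLin] RRinv by simp
    also have "\<dots> = vec.span (g ` J1)" using span_vals_zero[of g i0 UNIV] g by (simp add: T'_def J1_def)
    finally show "F' g \<in> vec.span (g ` J1)" by (simp add: F'_def)
  qed
  have "\<exists>lam. \<forall>g\<in>T'. F' g = (\<Sum>j\<in>J1. lam j *s g j)"
    by (rule T1[rule_format, OF T'sub T'F cdT]) (use F'add F'rc in auto)
  then obtain lam where lam: "\<forall>g\<in>T'. F' g = (\<Sum>j\<in>J1. lam j *s g j)" by blast
  define y0 where "y0 = (\<Sum>j\<in>J1. lam j *s \<beta> j)"
  have Fker: "F s = s y0" if s: "s \<in> S" "s x = 0" for s
  proof -
    have "R s \<in> T'" using s \<beta>(1) by (simp add: T'_def S'_def R_def)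
    then have "F' (R s) = (\<Sum>j\<in>J1. lam j *s R s j)" using lam by blast
    moreover have "F' (R s) = F s" using RS[OF s(1)] by (simp add: F'_def)
    moreover have "s y0 = (\<Sum>j\<in>J1. lam j *s s (\<beta> j))"
      unfolding y0_def by (rule lin_sum_apply[OF linS]) (use s S_sub in auto)
    ultimately show ?thesis by (simp add: R_def)
  qed
  have partA: "is_local S F" if "evalset S x = {0}"
  proof -
    have "\<forall>s\<in>S. F s = s y0"
    proof
      fix s assume s: "s \<in> S"
      then have "s x \<in> evalset S x" by (simp add: evalset_def)
      then show "F s = s y0" using Fker[OF s] that by simp
    qed
    then show ?thesis unfolding is_local_def by blast
  qed
  define G where "G = (\<lambda>s. F s - s y0)"
  have Gadd: "G (s + t) = G s + G t" if "s \<in> S" "t \<in> S" for s t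
    using F_hom that by (simp add: G_def algebra_simps)
  have G0: "G s = 0" if "s \<in> S" "s x = 0" for s using Fker[OF that] by (simp add: G_def)
  have Grange: "G s \<in> range s" if s: "s \<in> S" for s
  proof -
    have "F s \<in> range s" using F_rc s by (simp add: range_compatible_def)
    moreover have "s y0 \<in> range s" by simp
    ultimately show ?thesis unfolding G_def
      using vec.subspace_diff[OF range_subspace[OF linS]] s S_sub by blast
  qed
  have Gline: "G s \<in> vec.span {s x}" if s: "s \<in> S" for s
  proof (rule ccontr)
    assume w: "G s \<notin> vec.span {s x}"
    define f0 where "f0 = (\<lambda>j. if j = i0 then 0 else s (\<beta> j))"
    have f0F: "f0 \<in> FamU J1" by (auto simp: f0_def Fam_def J1_def)
    have cdq: "int (funvs.dim (Fam (UNIV::('k^'m) set) J1)) - int (funvs.dim T')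
            \<le> int (vec.dim (UNIV::('k^'m) set)) - 2"
      using cdT nd by simp
    obtain t where t: "t \<in> T'" "G s \<notin> vec.span (insert (s x) ((\<lambda>j. f0 j + t j) ` J1))"
      using Qc[OF T'sub T'F f0F w cdq] by blast
    define s2 where "s2 = Rinv t"
    have s2S: "s2 \<in> S" using Rinv_S' t(1) by (simp add: s2_def T'_def)
    have s2b: "s2 (\<beta> j) = t j" for j by (simp add: s2_def Rinv_beta)
    have s2x: "s2 x = 0" using s2b[of i0] t(1) \<beta>(1) by (simp add: T'_def)
    have ss2: "s + s2 \<in> S" using s s2S funvs.subspace_add[OF S_subspace] by blast
    have "G s = G (s + s2)" using Gadd[OF s s2S] G0[OF s2S s2x] by simp
    also have "\<dots> \<in> range (s + s2)" by (rule Grange[OF ss2])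
    also have "range (s + s2) = vec.span (range (R (s + s2)))" using rng ss2 S_sub by blast
    also have "range (R (s + s2)) = insert (s x) ((\<lambda>j. f0 j + t j) ` J1)"
    proof -
      have U: "(UNIV::'n set) = insert i0 J1" by (auto simp: J1_def)
      have "range (R (s + s2)) = insert (R (s + s2) i0) (R (s + s2) ` J1)"
        by (subst U) simp
      moreover have "R (s + s2) i0 = s x" using s2x \<beta>(1) by (simp add: R_def)
      moreover have "R (s + s2) ` J1 = (\<lambda>j. f0 j + t j) ` J1"
        by (rule image_cong) (auto simp: R_def f0_def J1_def s2b)
      ultimately show ?thesis by simp
    qed
    finally show False using t(2) by simp
  qed
  define \<alpha> where "\<alpha> = (\<lambda>a. G (SOME s. s \<in> S \<and> s x = a))"
  have \<alpha>G: "\<alpha> (s x) = G s" if s: "s \<in> S" for s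
  proof -
    define s' where "s' = (SOME t. t \<in> S \<and> t x = s x)"
    have s': "s' \<in> S" "s' x = s x" unfolding s'_def using someI[of "\<lambda>t. t \<in> S \<and> t x = s x" s] s by auto
    have d: "s - s' \<in> S" using funvs.subspace_diff[OF S_subspace s s'(1)] .
    have "(s - s') x = 0" using s'(2) by simp
    then have "G (s - s') = 0" using G0[OF d] by simp
    moreover have "G s = G (s - s') + G s'" using Gadd[OF d s'(1)] by simp
    ultimately show ?thesis unfolding \<alpha>_def s'_def[symmetric] by simp
  qed
  have Sxsub: "vec.subspace (evalset S x)"
    unfolding vec.subspace_def evalset_def
  proof (intro conjI ballI allI)
    have "(0::'k^'n \<Rightarrow> 'k^'m) \<in> S" using funvs.subspace_0[OF S_subspace] .
    moreover have "(0::'k^'m) = (0::'k^'n \<Rightarrow> 'k^'m) x" by simp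
    ultimately show "0 \<in> (\<lambda>s. s x) ` S" by (rule rev_image_eqI[where f="\<lambda>s. s x"])
  next
    fix a b assume "a \<in> (\<lambda>s. s x) ` S" "b \<in> (\<lambda>s. s x) ` S"
    then obtain s t where st: "s \<in> S" "t \<in> S" "a = s x" "b = t x" by auto
    have "s + t \<in> S" using funvs.subspace_add[OF S_subspace st(1,2)] .
    moreover have "a + b = (s + t) x" using st by simp
    ultimately show "a + b \<in> (\<lambda>s. s x) ` S" by (rule rev_image_eqI[where f="\<lambda>s. s x"])
  next
    fix c a assume "a \<in> (\<lambda>s. s x) ` S"
    then obtain s where st: "s \<in> S" "a = s x" by auto
    have "fscale c s \<in> S" using funvs.subspace_scale[OF S_subspace st(1)] .
    moreover have "c *s a = fscale c s x" using st by (simp add: fscale_apply)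
    ultimately show "c *s a \<in> (\<lambda>s. s x) ` S" by (rule rev_image_eqI[where f="\<lambda>s. s x"])
  qed
  have partB: "\<alpha> ` evalset S x \<subseteq> evalset S x
                 \<and> (\<forall>a\<in>evalset S x. \<forall>b\<in>evalset S x. \<alpha> (a + b) = \<alpha> a + \<alpha> b)
                 \<and> (\<forall>s\<in>S. F s = s y0 + \<alpha> (s x))"
  proof (intro conjI ballI)
    show "\<alpha> ` evalset S x \<subseteq> evalset S x"
    proof
      fix b assume "b \<in> \<alpha> ` evalset S x"
      then obtain s where s: "s \<in> S" "b = \<alpha> (s x)" by (auto simp: evalset_def)
      then have "b \<in> vec.span {s x}" using Gline \<alpha>G by simp
      moreover have "vec.span {s x} \<subseteq> evalset S x"
        using Sxsub s(1) by (intro vec.span_minimal) (auto simp: evalset_def)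
      ultimately show "b \<in> evalset S x" by blast
    qed
  next
    fix a b assume "a \<in> evalset S x" "b \<in> evalset S x"
    then obtain s t where st: "s \<in> S" "t \<in> S" "a = s x" "b = t x" by (auto simp: evalset_def)
    have "a + b = (s + t) x" using st by simp
    moreover have "s + t \<in> S" using st funvs.subspace_add[OF S_subspace] by blast
    ultimately have "\<alpha> (a + b) = G (s + t)" using \<alpha>G[of "s + t"] by simp
    also have "\<dots> = G s + G t" by (rule Gadd[OF st(1,2)])
    finally show "\<alpha> (a + b) = \<alpha> a + \<alpha> b" using \<alpha>G st by simp
  next
    fix s assume "s \<in> S"
    then show "F s = s y0 + \<alpha> (s x)" using \<alpha>G by (simp add: G_def)
  qed
  have partC: "is_local S F" if lin: "\<forall>s\<in>S. \<forall>c. F (fscale c s) = c *s F s"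
  proof (cases "evalset S x = {0}")
    case True then show ?thesis by (rule partA)
  next
    case False
    have "0 \<in> evalset S x" using vec.subspace_0[OF Sxsub] .
    then obtain d where d: "d \<in> evalset S x" "d \<noteq> 0" using False by blast
    then obtain s0 where s0: "s0 \<in> S" "s0 x = d" by (auto simp: evalset_def)
    have spd: "vec.span {d} \<subseteq> evalset S x" using Sxsub d(1) by (intro vec.span_minimal) auto
    have "vec.dim (evalset S x) \<le> vec.dim (vec.span {d})" using dim_Sx d(2) by simp
    then have spdeq: "vec.span {d} = evalset S x"
      using vec.subspace_dim_equal[OF vec.subspace_span Sxsub spd] by simp
    obtain \<mu> where \<mu>: "G s0 = \<mu> *s d" using Gline[OF s0(1)] s0(2) by (auto simp: vec.span_singleton)
    have "\<forall>s\<in>S. F s = s (y0 + \<mu> *s x)"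
    proof
      fix s assume s: "s \<in> S"
      have "s x \<in> vec.span {d}" using spdeq s by (simp add: evalset_def)
      then obtain k where k: "s x = k *s d" by (auto simp: vec.span_singleton)
      define s1 where "s1 = fscale k s0"
      have s1S: "s1 \<in> S" unfolding s1_def using funvs.subspace_scale[OF S_subspace s0(1)] .
      have s1x: "s1 x = s x" using k s0(2) by (simp add: s1_def fscale_apply)
      have "G s = \<alpha> (s x)" using \<alpha>G[OF s] by simp
      also have "\<dots> = G s1" using \<alpha>G[OF s1S] s1x by simp
      also have "G s1 = k *s G s0"
        using lin s0(1) by (simp add: G_def s1_def fscale_apply vec.scale_right_diff_distrib)
      also have "\<dots> = \<mu> *s s x" using \<mu> k by (simp add: vector_smult_assoc mult.commute)
      finally have "F s = s y0 + \<mu> *s s x" by (simp add: G_def algebra_simps)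
      also have "\<dots> = s (y0 + \<mu> *s x)"
      proof -
        have ls: "Vector_Spaces.linear (*s) (*s) s" using linS s S_sub by blast
        show ?thesis by (simp add: lin_add[OF ls] lin_scale[OF ls])
      qed
      finally show "F s = s (y0 + \<mu> *s x)" .
    qed
    then show ?thesis unfolding is_local_def by blast
  qed
  show ?thesis using partA partB partC by blast
qed



end
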